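(* Let $\mathcal{H}$ be a two-dimensional Hilbert space, let $\varepsilon\in[0,1]$, and let $\mathcal{D}_\varepsilon(\rho)=(1-\varepsilon)\rho+\varepsilon\frac{1}{2}\mathrm{tr}\rho$ be the depolarizing map on $\mathcal{L}(\mathcal{H})$. For any trace-preserving completely positive (TPCP) map $\mathcal{E}$ on $\mathcal{L}(\mathcal{H})$ there exists a TPCP map $\tilde{\mathcal{E}}$ on $\mathcal{L}(\mathcal{H})$ such that $\mathcal{D}_\varepsilon\circ\mathcal{E}=\tilde{\mathcal{E}}\circ\mathcal{D}_\varepsilon$.
   Context: $\mathcal{L}(\mathcal{H})$ denotes the set of linear operators on $\mathcal{H}$. *)

theory Defs
  imports "HOL-Analysis.Analysis"
begin

text \<open>Operators on a two-dimensional Hilbert space H = C^2 are 2x2 complex matrices.\<close>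
type_synonym qop = "complex ^ 2 ^ 2"

definition qtrace :: "qop \<Rightarrow> complex" where
  "qtrace A = (\<Sum>i\<in>UNIV. A $ i $ i)"

definition qscale :: "complex \<Rightarrow> qop \<Rightarrow> qop" where
  "qscale c A = (\<chi> i j. c * A $ i $ j)"

definition qid :: qop where
  "qid = (\<chi> i j. if i = j then 1 else 0)"

definition clinear_map :: "(qop \<Rightarrow> qop) \<Rightarrow> bool" where
  "clinear_map E \<longleftrightarrow> (\<forall>A B. E (A + B) = E A + E B) \<and> (\<forall>c A. E (qscale c A) = qscale c (E A))"

definition trace_preserving :: "(qop \<Rightarrow> qop) \<Rightarrow> bool" where
  "trace_preserving E \<longleftrightarrow> (\<forall>A. qtrace (E A) = qtrace A)"

text \<open>An n x n block matrix X with blocks X a b in L(H) (a, b < n), i.e. an element of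
  M_n(C) \<otimes> L(H), is positive semidefinite iff its quadratic form is real and nonnegative
  on every vector of C^n \<otimes> H (represented as v :: nat => complex^2, using components a < n).\<close>
definition block_psd :: "nat \<Rightarrow> (nat \<Rightarrow> nat \<Rightarrow> qop) \<Rightarrow> bool" where
  "block_psd n X \<longleftrightarrow> (\<forall>v :: nat \<Rightarrow> complex ^ 2.
     (let q = (\<Sum>a<n. \<Sum>b<n. \<Sum>i\<in>UNIV. \<Sum>j\<in>UNIV. cnj (v a $ i) * X a b $ i $ j * v b $ j)
      in q \<in> \<real> \<and> Re q \<ge> 0))"

text \<open>Complete positivity: id_n \<otimes> E is positive for every n.\<close>
definition completely_positive :: "(qop \<Rightarrow> qop) \<Rightarrow> bool" where
  "completely_positive E \<longleftrightarrow> (\<forall>n X. block_psd n X \<longrightarrow> block_psd n (\<lambda>a b. E (X a b)))"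

definition TPCP :: "(qop \<Rightarrow> qop) \<Rightarrow> bool" where
  "TPCP E \<longleftrightarrow> clinear_map E \<and> trace_preserving E \<and> completely_positive E"

definition depol :: "real \<Rightarrow> qop \<Rightarrow> qop" where
  "depol \<epsilon> \<rho> = qscale (complex_of_real (1 - \<epsilon>)) \<rho> + qscale (complex_of_real \<epsilon> * qtrace \<rho> / 2) qid"

end

theory Submission
  imports Defs
begin

definition theta :: "qop \<Rightarrow> qop" where
  "theta A = qscale (qtrace A) qid - A"

lemma qscale_nth[simp]: "qscale c A $ i $ j = c * A $ i $ j"
  by (simp add: qscale_def)

lemma qid_nth[simp]: "qid $ i $ j = (if i = j then 1 else 0)"
  by (simp add: qid_def)

lemma qtrace2: "qtrace A = A$1$1 + A$2$2"
  by (simp add: qtrace_def sum_2)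

lemma theta_nth: "theta A $ i $ j = (if i = j then A$1$1 + A$2$2 else 0) - A $ i $ j"
  by (simp add: theta_def qtrace2)

lemma block_comb:
  assumes "block_psd n X" "block_psd n Y" "c1 \<ge> 0" "c2 \<ge> 0"
  shows "block_psd n (\<lambda>a b. qscale (complex_of_real c1) (X a b) + qscale (complex_of_real c2) (Y a b))"
  unfolding block_psd_def
proof
  fix v :: "nat \<Rightarrow> complex ^ 2"
  define q1 where "q1 = (\<Sum>a<n. \<Sum>b<n. \<Sum>i\<in>UNIV. \<Sum>j\<in>UNIV. cnj (v a $ i) * X a b $ i $ j * v b $ j)"
  define q2 where "q2 = (\<Sum>a<n. \<Sum>b<n. \<Sum>i\<in>UNIV. \<Sum>j\<in>UNIV. cnj (v a $ i) * Y a b $ i $ j * v b $ j)"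
  have h1: "q1 \<in> \<real> \<and> Re q1 \<ge> 0" using assms(1) unfolding block_psd_def Let_def q1_def by blast
  have h2: "q2 \<in> \<real> \<and> Re q2 \<ge> 0" using assms(2) unfolding block_psd_def Let_def q2_def by blast
  have eq: "(\<Sum>a<n. \<Sum>b<n. \<Sum>i\<in>UNIV. \<Sum>j\<in>UNIV. cnj (v a $ i) * (qscale (complex_of_real c1) (X a b) + qscale (complex_of_real c2) (Y a b)) $ i $ j * v b $ j)
     = complex_of_real c1 * q1 + complex_of_real c2 * q2"
    unfolding q1_def q2_def
    by (simp add: sum_distrib_left sum.distrib algebra_simps)
  show "let q = (\<Sum>a<n. \<Sum>b<n. \<Sum>i\<in>UNIV. \<Sum>j\<in>UNIV. cnj (v a $ i) * (qscale (complex_of_real c1) (X a b) + qscale (complex_of_real c2) (Y a b)) $ i $ j * v b $ j) in q \<in> \<real> \<and> 0 \<le> Re q"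
    unfolding eq Let_def using h1 h2 assms(3,4)
    by (auto simp: Reals_def) (metis of_real_add of_real_mult rangeI)
qed

lemma block_theta:
  assumes "block_psd n X"
  shows "block_psd n (\<lambda>a b. theta (X b a))"
  unfolding block_psd_def
proof
  fix v :: "nat \<Rightarrow> complex ^ 2"
  define w :: "nat \<Rightarrow> complex ^ 2" where "w = (\<lambda>a. \<chi> k. if k = 1 then cnj (v a $ 2) else - cnj (v a $ 1))"
  have w1: "w a $ 1 = cnj (v a $ 2)" for a by (simp add: w_def)
  have w2: "w a $ 2 = - cnj (v a $ 1)" for a by (simp add: w_def)
  define q where "q = (\<Sum>a<n. \<Sum>b<n. \<Sum>i\<in>UNIV. \<Sum>j\<in>UNIV. cnj (w a $ i) * X a b $ i $ j * w b $ j)"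
  have h: "q \<in> \<real> \<and> Re q \<ge> 0" using assms unfolding block_psd_def Let_def q_def by blast
  have blk: "(\<Sum>i\<in>UNIV. \<Sum>j\<in>UNIV. cnj (v a $ i) * theta (X b a) $ i $ j * v b $ j)
     = (\<Sum>i\<in>UNIV. \<Sum>j\<in>UNIV. cnj (w b $ i) * X b a $ i $ j * w a $ j)" for a b
    by (simp add: sum_2 theta_nth w1 w2 algebra_simps)
  have eq: "(\<Sum>a<n. \<Sum>b<n. \<Sum>i\<in>UNIV. \<Sum>j\<in>UNIV. cnj (v a $ i) * theta (X b a) $ i $ j * v b $ j) = q"
    unfolding q_def blk by (rule sum.swap)
  show "let q = (\<Sum>a<n. \<Sum>b<n. \<Sum>i\<in>UNIV. \<Sum>j\<in>UNIV. cnj (v a $ i) * theta (X b a) $ i $ j * v b $ j) in q \<in> \<real> \<and> 0 \<le> Re q"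
    unfolding eq Let_def using h by blast
qed

lemma qtrace_add: "qtrace (A + B) = qtrace A + qtrace B" by (simp add: qtrace2)
lemma qtrace_diff: "qtrace (A - B) = qtrace A - qtrace B" by (simp add: qtrace2)
lemma qtrace_scale: "qtrace (qscale c A) = c * qtrace A" by (simp add: qtrace2 algebra_simps)
lemma qtrace_id: "qtrace qid = 2" by (simp add: qtrace2)

lemma lin_diff:
  assumes "clinear_map E" shows "E (A - B) = E A - E B"
proof -
  have "A - B = A + qscale (-1) B" by (simp add: vec_eq_iff)
  moreover have "E A - E B = E A + qscale (-1) (E B)" by (simp add: vec_eq_iff)
  ultimately show ?thesis using assms unfolding clinear_map_def by metis
qed

theorem lemma2:
  fixes \<epsilon> :: real and E :: "qop \<Rightarrow> qop"
  assumes "0 \<le> \<epsilon>" and "\<epsilon> \<le> 1" and "TPCP E"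
  shows "\<exists>E'. TPCP E' \<and> depol \<epsilon> \<circ> E = E' \<circ> depol \<epsilon>"
proof -
  have lin: "clinear_map E" and tp: "trace_preserving E" and cp: "completely_positive E"
    using assms(3) unfolding TPCP_def by auto
  have Eadd: "E (A + B) = E A + E B" for A B using lin unfolding clinear_map_def by blast
  have Esc: "E (qscale c A) = qscale c (E A)" for c A using lin unfolding clinear_map_def by blast
  have Etr: "qtrace (E A) = qtrace A" for A using tp unfolding trace_preserving_def by blast
  define E' where "E' = (\<lambda>A. E A + qscale (complex_of_real \<epsilon> / 2 * qtrace A) (qid - E qid))"
  have trE': "qtrace (E' A) = qtrace A" for A
    by (simp add: E'_def qtrace_add qtrace_diff qtrace_scale qtrace_id Etr)
  have linE': "clinear_map E'"
    unfolding clinear_map_def E'_def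
    by (auto simp: Eadd Esc qtrace_add qtrace_scale vec_eq_iff field_simps)
  have tth: "theta (E (theta A)) = E A + qscale (qtrace A) (qid - E qid)" for A
  proof -
    have "E (theta A) = qscale (qtrace A) (E qid) - E A"
      unfolding theta_def using lin_diff[OF lin] Esc by simp
    moreover have "qtrace (E (theta A)) = qtrace A"
      unfolding Etr theta_def by (simp add: qtrace_diff qtrace_scale qtrace_id)
    ultimately show ?thesis unfolding theta_def
      by (simp add: vec_eq_iff algebra_simps)
  qed
  have E'eq: "E' A = qscale (complex_of_real (1 - \<epsilon>/2)) (E A) + qscale (complex_of_real (\<epsilon>/2)) (theta (E (theta A)))" for A
    unfolding tth E'_def by (simp add: vec_eq_iff algebra_simps)
  have cpE': "completely_positive E'"
    unfolding completely_positive_def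
  proof (intro allI impI)
    fix n X assume X: "block_psd n X"
    have P1: "block_psd n (\<lambda>a b. E (X a b))" using cp X unfolding completely_positive_def by blast
    have "block_psd n (\<lambda>a b. theta (X b a))" using block_theta[OF X] .
    then have "block_psd n (\<lambda>a b. E (theta (X b a)))" using cp unfolding completely_positive_def by blast
    from block_theta[OF this] have P2: "block_psd n (\<lambda>a b. theta (E (theta (X a b))))" .
    have "block_psd n (\<lambda>a b. qscale (complex_of_real (1 - \<epsilon>/2)) (E (X a b)) + qscale (complex_of_real (\<epsilon>/2)) (theta (E (theta (X a b)))))"
      by (rule block_comb[OF P1 P2]) (use assms(1,2) in auto)
    then show "block_psd n (\<lambda>a b. E' (X a b))" unfolding E'eq .
  qed
  have comm: "depol \<epsilon> (E A) = E' (depol \<epsilon> A)" for A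
    unfolding depol_def E'_def Eadd Esc
    by (simp add: Etr qtrace_add qtrace_scale qtrace_id vec_eq_iff algebra_simps)
  show ?thesis
    by (rule exI[of _ E']) (auto simp: TPCP_def linE' trace_preserving_def trE' cpE' comm)
qed

end
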